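(* Let $b>2$ be an integer and let $G$ be a $b$-dc-semigroup. \begin{enumerate} \item The set $U_b=\{I_b(i,k): i\in\mathbf{N},\ k\in\mathbf{N}^*\}$, endowed with the operation $I_b(i,k)\cdot I_b(j,l)=I_b(i+j,k+l)$, is an abelian semigroup. \item If $i,j\in\mathbf{N}$, $k,l\in\mathbf{N}^*$, $I_b(i,k)\subseteq G$ and $I_b(j,l)\subseteq G$, then $I_b(i,k)\cdot I_b(j,l)=I_b(i+j,k+l)\subseteq G$. \end{enumerate}
   Context: $\mathbf{N}=\{0,1,2,\dots\}$ and $\mathbf{N}^*=\mathbf{N}\setminus\{0\}$. Fix an integer base $b\ge 2$. A $b$-dc-semigroup is a subsemigroup $G$ of the multiplicative semigroup $(\mathbf{N}^*,\cdot)$ which is closed with respect to the number of digits in base $b$: whenever $x\in G$ has a base-$b$ representation with exactly $n$ digits (leading digit nonzero), every positive integer whose base-$b$ representation has exactly $n$ digits also lies in $G$; equivalently, if $x\in G$ and $b^{n-1}\le x<b^n$ then $\{y\in\mathbf{N}: b^{n-1}\le y<b^n\}\subseteq G$. For $i\in\mathbf{N}$ and $j\in\mathbf{N}^*$, $I_b(i,j)=\{x\in\mathbf{N}: b^i\le x<b^{i+j}\}$ and $I_b(i,+\infty)=\{x\in\mathbf{N}: x\ge b^i\}$. *)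

theory Defs
  imports Main
begin

definition I_b :: "nat \<Rightarrow> nat \<Rightarrow> nat \<Rightarrow> nat set" where
  "I_b b i j = {x. b ^ i \<le> x \<and> x < b ^ (i + j)}"

definition U_b :: "nat \<Rightarrow> nat set set" where
  "U_b b = {I_b b i k | i k. 0 < k}"

text \<open>b-dc-semigroup: multiplicative subsemigroup of the positive integers
  closed with respect to the number of base-b digits.\<close>
definition dc_semigroup :: "nat \<Rightarrow> nat set \<Rightarrow> bool" where
  "dc_semigroup b G \<longleftrightarrow>
     G \<subseteq> {x. 0 < x} \<and>
     (\<forall>x\<in>G. \<forall>y\<in>G. x * y \<in> G) \<and>
     (\<forall>x\<in>G. \<forall>n::nat. 1 \<le> n \<and> b ^ (n - 1) \<le> x \<and> x < b ^ n \<longrightarrow>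
        {y. b ^ (n - 1) \<le> y \<and> y < b ^ n} \<subseteq> G)"

end

theory Submission
  imports Defs
begin

lemma Ib_inj:
  assumes b: "b > 1" and k: "0 < k" and l: "0 < l" and eq: "I_b b i k = I_b b j l"
  shows "i = j \<and> k = l"
proof -
  have lt1: "b ^ i < b ^ (i + k)" using b k by simp
  have lt2: "b ^ j < b ^ (j + l)" using b l by simp
  have m1: "b ^ i \<in> I_b b j l" using lt1 unfolding eq[symmetric] by (simp add: I_b_def)
  have m2: "b ^ j \<in> I_b b i k" using lt2 unfolding eq by (simp add: I_b_def)
  have "b ^ i = b ^ j" using m1 m2 by (simp add: I_b_def)
  hence ij: "i = j" using b by simp
  have t1: "b ^ (i + k) - 1 \<in> I_b b j l" using lt1 unfolding eq[symmetric] by (auto simp: I_b_def)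
  have t2: "b ^ (j + l) - 1 \<in> I_b b i k" using lt2 unfolding eq by (auto simp: I_b_def)
  have "b ^ (i + k) = b ^ (j + l)" using t1 t2 lt1 lt2 by (auto simp: I_b_def)
  hence "i + k = j + l" using b by simp
  thus ?thesis using ij by simp
qed

lemma cls:
  assumes "dc_semigroup b G" "w \<in> G" "b ^ m \<le> w" "w < b ^ (m + 1)"
    "b ^ m \<le> z" "z < b ^ (m + 1)"
  shows "z \<in> G"
proof -
  have "{y. b ^ (Suc m - 1) \<le> y \<and> y < b ^ Suc m} \<subseteq> G"
    using assms(1) assms(2-4) unfolding dc_semigroup_def by (metis Suc_eq_plus1 diff_Suc_1 le_add2)
  thus ?thesis using assms(5,6) by auto
qed

theorem lemma2p1:
  fixes b :: nat and G :: "nat set"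
  assumes "b > 2" and "dc_semigroup b G"
  shows "(\<exists>op :: nat set \<Rightarrow> nat set \<Rightarrow> nat set.
            (\<forall>i k j l. 0 < k \<longrightarrow> 0 < l \<longrightarrow>
               op (I_b b i k) (I_b b j l) = I_b b (i + j) (k + l)) \<and>
            (\<forall>A\<in>U_b b. \<forall>B\<in>U_b b. op A B \<in> U_b b) \<and>
            (\<forall>A\<in>U_b b. \<forall>B\<in>U_b b. \<forall>C\<in>U_b b. op (op A B) C = op A (op B C)) \<and>
            (\<forall>A\<in>U_b b. \<forall>B\<in>U_b b. op A B = op B A))
       \<and> (\<forall>i j k l. 0 < k \<longrightarrow> 0 < l \<longrightarrow> I_b b i k \<subseteq> G \<longrightarrow> I_b b j l \<subseteq> G \<longrightarrow>
               I_b b (i + j) (k + l) \<subseteq> G)"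
proof
  have b1: "b > 1" using assms(1) by simp
  define P where "P A = (SOME p. 0 < snd p \<and> A = I_b b (fst p) (snd p))" for A
  have Pk: "P (I_b b i k) = (i, k)" if "0 < k" for i k
  proof -
    have ex: "\<exists>p. 0 < snd p \<and> I_b b i k = I_b b (fst p) (snd p)" using that by (intro exI[of _ "(i,k)"]) simp
    have "0 < snd (P (I_b b i k)) \<and> I_b b i k = I_b b (fst (P (I_b b i k))) (snd (P (I_b b i k)))"
      unfolding P_def by (rule someI_ex[OF ex])
    thus ?thesis using Ib_inj[OF b1 that] by (metis prod.collapse)
  qed
  define op where "op A B = I_b b (fst (P A) + fst (P B)) (snd (P A) + snd (P B))" for A B
  have opI: "op (I_b b i k) (I_b b j l) = I_b b (i + j) (k + l)" if "0 < k" "0 < l" for i k j l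
    using Pk that by (simp add: op_def)
  show "\<exists>op :: nat set \<Rightarrow> nat set \<Rightarrow> nat set.
            (\<forall>i k j l. 0 < k \<longrightarrow> 0 < l \<longrightarrow>
               op (I_b b i k) (I_b b j l) = I_b b (i + j) (k + l)) \<and>
            (\<forall>A\<in>U_b b. \<forall>B\<in>U_b b. op A B \<in> U_b b) \<and>
            (\<forall>A\<in>U_b b. \<forall>B\<in>U_b b. \<forall>C\<in>U_b b. op (op A B) C = op A (op B C)) \<and>
            (\<forall>A\<in>U_b b. \<forall>B\<in>U_b b. op A B = op B A)"
  proof (intro exI[of _ op] conjI ballI allI impI)
    fix i k j l :: nat assume "0 < k" "0 < l"
    thus "op (I_b b i k) (I_b b j l) = I_b b (i + j) (k + l)" by (rule opI)
  next
    fix A B assume "A \<in> U_b b" "B \<in> U_b b"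
    then obtain i k j l where "A = I_b b i k" "0<k" "B = I_b b j l" "0 < l" by (auto simp: U_b_def)
    thus "op A B \<in> U_b b" using opI by (auto simp: U_b_def)
  next
    fix A B C assume "A \<in> U_b b" "B \<in> U_b b" "C \<in> U_b b"
    then obtain i k j l m n where "A = I_b b i k" "0<k" "B = I_b b j l" "0 < l"
       "C = I_b b m n" "0 < n" by (auto simp: U_b_def)
    thus "op (op A B) C = op A (op B C)" using opI by (simp add: add.assoc)
  next
    fix A B assume "A \<in> U_b b" "B \<in> U_b b"
    then obtain i k j l where "A = I_b b i k" "0<k" "B = I_b b j l" "0 < l" by (auto simp: U_b_def)
    thus "op A B = op B A" using opI by (simp add: add.commute)
  qed
next
  have b1: "b > 1" using assms(1) by simp
  have mul: "x \<in> G \<Longrightarrow> y \<in> G \<Longrightarrow> x * y \<in> G" for x y using assms(2) by (auto simp: dc_semigroup_def)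
  show "\<forall>i j k l. 0 < k \<longrightarrow> 0 < l \<longrightarrow> I_b b i k \<subseteq> G \<longrightarrow> I_b b j l \<subseteq> G \<longrightarrow>
               I_b b (i + j) (k + l) \<subseteq> G"
  proof (intro allI impI subsetI)
    fix i j k l z assume k: "0 < k" and l: "0 < l" and A: "I_b b i k \<subseteq> G" and B: "I_b b j l \<subseteq> G"
      and z: "z \<in> I_b b (i + j) (k + l)"
    define s where "s = i + j + k + l"
    have cl: "\<And>y. b ^ m \<le> y \<Longrightarrow> y < b ^ (m + 1) \<Longrightarrow> y \<in> G" if "i + j \<le> m" "m < s" for m
    proof -
      fix y assume y: "b ^ m \<le> y" "y < b ^ (m + 1)"
      show "y \<in> G"
      proof (cases "m + 2 \<le> s")
        case True
        define m1 where "m1 = min (m - j) (i + k - 1)"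
        define m2 where "m2 = m - m1"
        have r1: "i \<le> m1" "m1 < i + k" using that k unfolding m1_def by auto
        have r2: "j \<le> m2" "m2 < j + l" using that True k l unfolding m2_def m1_def s_def by auto
        have g1: "b ^ m1 \<in> G" using A r1 b1 by (auto simp: I_b_def)
        have g2: "b ^ m2 \<in> G" using B r2 b1 by (auto simp: I_b_def)
        have "b ^ m1 * b ^ m2 = b ^ m" proof -
          have "m1 + m2 = m" using that unfolding m2_def m1_def by simp
          thus ?thesis by (metis power_add)
        qed
        hence "b ^ m \<in> G" using mul[OF g1 g2] by simp
        thus ?thesis using cls[OF assms(2) _ _ _ y] b1 by simp
      next
        case False
        hence ms: "m = s - 1" using that by simp
        define x1 where "x1 = (b - 1) * b ^ (i + k - 1)"
        define x2 where "x2 = (b - 1) * b ^ (j + l - 1)"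
        have "b ^ i \<le> b ^ (i + k - 1)" using b1 k by simp
        also have "\<dots> \<le> x1" unfolding x1_def using assms(1) by simp
        finally have x1a: "b ^ i \<le> x1" .
        have "x1 < b * b ^ (i + k - 1)" unfolding x1_def using b1 by simp
        also have "\<dots> = b ^ (i + k)" using k by (metis Suc_pred' add_gr_0 power_Suc)
        finally have x1b: "x1 < b ^ (i + k)" .
        have "b ^ j \<le> b ^ (j + l - 1)" using b1 l by simp
        also have "\<dots> \<le> x2" unfolding x2_def using assms(1) by simp
        finally have x2a: "b ^ j \<le> x2" .
        have "x2 < b * b ^ (j + l - 1)" unfolding x2_def using b1 by simp
        also have "\<dots> = b ^ (j + l)" using l by (metis Suc_pred' add_gr_0 power_Suc)
        finally have x2b: "x2 < b ^ (j + l)" .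
        have g: "x1 * x2 \<in> G" using A B x1a x1b x2a x2b mul by (auto simp: I_b_def)
        have e: "x1 * x2 = ((b - 1) * (b - 1)) * b ^ (s - 2)"
        proof -
          have "(i + k - 1) + (j + l - 1) = s - 2" unfolding s_def using k l by simp
          hence "b ^ (i + k - 1) * b ^ (j + l - 1) = b ^ (s - 2)" by (metis power_add)
          thus ?thesis unfolding x1_def x2_def by (metis mult.assoc mult.left_commute)
        qed
        have bb: "b \<le> (b - 1) * (b - 1)" using assms(1)
        proof -
          have "b * 1 \<le> (b - 1) * 2" using assms(1) by simp
          also have "\<dots> \<le> (b - 1) * (b - 1)" using assms(1) by (intro mult_le_mono2) simp
          finally show ?thesis by simp
        qed
        have bb2: "(b - 1) * (b - 1) < b * b" using b1 by (intro mult_strict_mono) auto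
        have s2: "s \<ge> 2" using k l unfolding s_def by simp
        have p1: "b ^ (s - 1) = b * b ^ (s - 2)" using s2 by (metis Suc_diff_Suc Suc_1 diff_Suc_1 le_eq_less_or_eq less_eq_Suc_le numeral_2_eq_2 power_Suc Suc_diff_le)
        have p2: "b ^ s = (b * b) * b ^ (s - 2)" using s2
          by (metis add_diff_inverse_nat le_less_trans less_irrefl_nat power_add power2_eq_square not_le_imp_less le_refl)
        have w1: "b ^ m \<le> x1 * x2" using ms e p1 bb by simp
        have w2: "x1 * x2 < b ^ (m + 1)" using ms e p2 bb2 s2 b1 by simp
        show ?thesis using cls[OF assms(2) g w1 w2 y] .
      qed
    qed
    have "\<forall>z. b ^ (i + j) \<le> z \<longrightarrow> z < b ^ (i + j + Suc n) \<longrightarrow> i + j + n < s \<longrightarrow> z \<in> G" for n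
    proof (induction n)
      case 0 thus ?case using cl[of "i+j"] by simp
    next
      case (Suc n)
      show ?case
      proof (intro allI impI)
        fix z assume h: "b ^ (i + j) \<le> z" "z < b ^ (i + j + Suc (Suc n))" "i + j + Suc n < s"
        show "z \<in> G"
        proof (cases "z < b ^ (i + j + Suc n)")
          case True thus ?thesis using Suc h by simp
        next
          case False thus ?thesis using cl[of "i + j + Suc n" z] h by simp
        qed
      qed
    qed
    from this[of "k + l - 1"] z k show "z \<in> G" unfolding s_def I_b_def by simp
  qed
qed

end
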